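(* Let $b(x)=\frac14x^4+\frac12px^2+qx$ with $p<0$, $q\in\mathbb{R}$, and $N(\eta,\tau)=\int_{-\infty}^{\infty}e^{2\tau[\eta\lambda-b(\lambda)]}\,d\lambda$. Define, for $(x,y,t),(r,s,u)\in\mathbb{R}^3$, $$\mathcal{S}[(x,y,t),(r,s,u)]=c\int_0^\infty\!\!\int_{-\infty}^\infty\tau\, e^{\tau[i(t-u)+i\eta(y-s)-(b(x)+b(r)-\eta(x+r))]}[N(\eta,\tau)]^{-1}\,d\eta\,d\tau,$$ and for $z,w\in\mathbb{C}^2$ $$S(z,w)=c\iint_{\tau>0}\tau\, e^{\eta\tau[z_1+\bar w_1]+i\tau[z_2-\bar w_2]}[N(\eta,\tau)]^{-1}\,d\eta\,d\tau,$$ with $c>0$ an absolute constant. Suppose $x,r\in\mathbb{R}$ satisfy either ($x=r$ and $|x|>\sqrt{-p}$) or $|x|=|r|=\sqrt{-p}$. Then $\mathcal{S}[(x,0,0),(r,0,0)]=+\infty$ (the integral, whose integrand is non-negative, diverges). Also, for $h,k\in\mathbb{R}$ with $\delta=h+k>0$, $$\lim_{\delta\to0^+}S[(x,\,i(b(x)+h)),(r,\,i(b(r)+k))]=\infty.$$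
   Context: Here $(x,i(b(x)+h))$ denotes the point $(z_1,z_2)=(x+i0,\,0+i(b(x)+h))\in\mathbb{C}^2$. The function $S$ is the Szeg\"o kernel of $\Omega=\{(z_1,z_2):\operatorname{Im}z_2>b(\operatorname{Re}z_1)\}$ and $\mathcal{S}$ is its expression on $\partial\Omega\cong\mathbb{R}^3$. *)

theory Defs
  imports "HOL-Analysis.Analysis"
begin

definition bq :: "real \<Rightarrow> real \<Rightarrow> real \<Rightarrow> real" where
  "bq p q x = x^4 / 4 + p * x^2 / 2 + q * x"

definition Nfun :: "(real \<Rightarrow> real) \<Rightarrow> real \<Rightarrow> real \<Rightarrow> real" where
  "Nfun b \<eta> \<tau> = (LBINT l. exp (2 * \<tau> * (\<eta> * l - b l)))"

definition bdry_integrand ::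
  "(real \<Rightarrow> real) \<Rightarrow> real \<times> real \<times> real \<Rightarrow> real \<times> real \<times> real \<Rightarrow> real \<times> real \<Rightarrow> complex" where
  "bdry_integrand b P Q z = (case P of (x, y, t) \<Rightarrow> case Q of (r, s, u) \<Rightarrow> case z of (\<tau>, \<eta>) \<Rightarrow>
     complex_of_real \<tau> *
     exp (complex_of_real \<tau> * (\<i> * complex_of_real (t - u) + \<i> * complex_of_real (\<eta> * (y - s))
            - complex_of_real (b x + b r - \<eta> * (x + r))))
     / complex_of_real (Nfun b \<eta> \<tau>))"

definition szego ::
  "real \<Rightarrow> (real \<Rightarrow> real) \<Rightarrow> complex \<times> complex \<Rightarrow> complex \<times> complex \<Rightarrow> complex" where
  "szego c b z w = complex_of_real c *
     (LINT v : {v. fst v > 0} | lborel \<Otimes>\<^sub>M lborel.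
        (case v of (\<tau>, \<eta>) \<Rightarrow>
          complex_of_real \<tau> *
          exp (complex_of_real (\<eta> * \<tau>) * (fst z + cnj (fst w))
               + \<i> * complex_of_real \<tau> * (snd z - cnj (snd w)))
          / complex_of_real (Nfun b \<eta> \<tau>)))"

end

theory Submission
  imports Defs
begin



lemma quart_bound:
  fixes a B D l :: real
  assumes "a > 0"
  shows "-a*l^4 + B*l^2 + D*\<bar>l\<bar> \<le> (\<bar>B\<bar>+\<bar>D\<bar>) + (\<bar>B\<bar>+\<bar>D\<bar>)^2/(4*a)"
proof -
  define B' where "B' = \<bar>B\<bar>+\<bar>D\<bar>"
  have l1: "\<bar>l\<bar> \<le> 1 + l^2"
  proof -
    have "0 \<le> (\<bar>l\<bar> - 1)^2" by simp
    hence "2*\<bar>l\<bar> \<le> 1 + \<bar>l\<bar>^2" by (simp add: power2_eq_square algebra_simps)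
    thus ?thesis by simp
  qed
  have "D*\<bar>l\<bar> \<le> \<bar>D\<bar>*\<bar>l\<bar>" by (simp add: mult_right_mono)
  also have "\<dots> \<le> \<bar>D\<bar>*(1+l^2)" by (rule mult_left_mono[OF l1]) simp
  finally have "D*\<bar>l\<bar> \<le> \<bar>D\<bar>*(1+l^2)" .
  moreover have "B*l^2 \<le> \<bar>B\<bar>*l^2" by (simp add: mult_right_mono)
  moreover have "B'*l^2 \<le> a*l^4 + B'^2/(4*a)"
  proof -
    have "0 \<le> (2*a*l^2 - B')^2" by simp
    hence "4*a*(B'*l^2) \<le> 4*a*(a*l^4 + B'^2/(4*a))" using assms
      by (simp add: power2_eq_square algebra_simps power4_eq_xxxx)
    thus ?thesis using assms by simp
  qed
  ultimately have "D*\<bar>l\<bar> \<le> \<bar>D\<bar> + \<bar>D\<bar>*l^2" "B*l^2 \<le> \<bar>B\<bar>*l^2"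
    "\<bar>B\<bar>*l^2 + \<bar>D\<bar>*l^2 \<le> a*l^4 + (\<bar>B\<bar>+\<bar>D\<bar>)^2/(4*a)"
    unfolding B'_def by (simp_all add: distrib_left distrib_right)
  thus ?thesis by linarith
qed

lemma nn_exp_half: "(\<integral>\<^sup>+l. ennreal (indicator {0..} l * exp (- l)) \<partial>lborel) = 1"
proof -
  have h: "((\<lambda>x::real. exp (-1*x)) has_integral exp (-1*0)/1) {0..}"
    by (rule has_integral_exp_minus_to_infinity) simp
  have "(\<integral>\<^sup>+x. ennreal (indicator {0..} x * exp (-1*x)) \<partial>lborel) = ennreal (exp (-1*0)/1)"
    by (rule nn_integral_has_integral_lebesgue[OF _ h]) auto
  thus ?thesis by simp
qed

lemma nn_exp_abs_le2: "(\<integral>\<^sup>+l. ennreal (exp (- \<bar>l::real\<bar>)) \<partial>lborel) \<le> 2"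
proof -
  define g where "g = (\<lambda>l::real. ennreal (indicator {0..} l * exp (- l)))"
  have gm: "g \<in> borel_measurable borel" unfolding g_def by measurable
  have "(\<integral>\<^sup>+l. ennreal (exp (- \<bar>l::real\<bar>)) \<partial>lborel) \<le> (\<integral>\<^sup>+l. g l + g (0 + (-1) * l) \<partial>lborel)"
  proof (rule nn_integral_mono)
    fix l :: real
    show "ennreal (exp (- \<bar>l\<bar>)) \<le> g l + g (0 + (-1) * l)"
      unfolding g_def by (cases "l \<ge> 0") (auto simp: indicator_def)
  qed
  also have "\<dots> = (\<integral>\<^sup>+l. g l \<partial>lborel) + (\<integral>\<^sup>+l. g (0 + (-1) * l) \<partial>lborel)"
    using gm by (intro nn_integral_add) auto
  also have "(\<integral>\<^sup>+l. g (0 + (-1) * l) \<partial>lborel) = (\<integral>\<^sup>+l. g l \<partial>lborel)"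
    using nn_integral_real_affine[OF gm, of "-1" 0] by simp
  also have "(\<integral>\<^sup>+l. g l \<partial>lborel) = 1" unfolding g_def using nn_exp_half by simp
  finally show ?thesis by (simp add: one_add_one)
qed

lemma integrable_exp_abs: "integrable lborel (\<lambda>l::real. exp (- \<bar>l\<bar>))"
proof (rule integrableI_bounded)
  show "(\<lambda>l::real. exp (- \<bar>l\<bar>)) \<in> borel_measurable lborel" by measurable
  have h: "(\<integral>\<^sup>+l. ennreal (norm (exp (- \<bar>l::real\<bar>))) \<partial>lborel) \<le> 2" using nn_exp_abs_le2 by simp
  show "(\<integral>\<^sup>+l. ennreal (norm (exp (- \<bar>l::real\<bar>))) \<partial>lborel) < \<infinity>" using h by (rule le_less_trans) simp
qed

lemma exp_poly_bound:
  fixes a B D cc :: real and f :: "real \<Rightarrow> real"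
  assumes "a > 0" and "\<And>l. f l \<le> -a*l^4 + B*l^2 + D*\<bar>l\<bar> + cc"
  shows "\<exists>K. \<forall>l. exp (f l) \<le> K * exp (- \<bar>l\<bar>)"
proof -
  define K0 where "K0 = (\<bar>B\<bar>+\<bar>D+1\<bar>) + (\<bar>B\<bar>+\<bar>D+1\<bar>)^2/(4*a) + cc"
  have "\<forall>l. exp (f l) \<le> exp K0 * exp (- \<bar>l\<bar>)"
  proof
    fix l
    have "f l + \<bar>l\<bar> \<le> -a*l^4 + B*l^2 + (D+1)*\<bar>l\<bar> + cc" using assms(2)[of l] by (simp add: algebra_simps)
    also have "\<dots> \<le> K0" using quart_bound[OF assms(1), of l B "D+1"] unfolding K0_def by simp
    finally have "f l \<le> K0 + (- \<bar>l\<bar>)" by simp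
    thus "exp (f l) \<le> exp K0 * exp (- \<bar>l\<bar>)" by (simp add: exp_add[symmetric])
  qed
  thus ?thesis by blast
qed

lemma integrable_exp_poly:
  fixes a B D cc :: real and f :: "real \<Rightarrow> real"
  assumes "a > 0" and "\<And>l. f l \<le> -a*l^4 + B*l^2 + D*\<bar>l\<bar> + cc"
    and [measurable]: "f \<in> borel_measurable borel"
  shows "integrable lborel (\<lambda>l. exp (f l))"
proof -
  obtain K where K: "\<And>l. exp (f l) \<le> K * exp (- \<bar>l\<bar>)" using exp_poly_bound[OF assms(1,2)] by blast
  show ?thesis
  proof (rule Bochner_Integration.integrable_bound)
    show "integrable lborel (\<lambda>l. K * exp (- \<bar>l\<bar>))" using integrable_exp_abs by simp
    show "(\<lambda>l. exp (f l)) \<in> borel_measurable lborel" by measurable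
    show "AE l in lborel. norm (exp (f l)) \<le> norm (K * exp (- \<bar>l\<bar>))"
      using K by (auto intro: order_trans[OF _ abs_ge_self])
  qed
qed

lemma N_integrable:
  fixes p q \<tau> \<eta> :: real
  assumes "\<tau> > 0"
  shows "integrable lborel (\<lambda>l. exp (2*\<tau>*(\<eta>*l - bq p q l)))"
proof (rule integrable_exp_poly[where a="\<tau>/2" and B="-\<tau>*p" and D="2*\<tau>*\<bar>\<eta>-q\<bar>" and cc=0])
  show "\<tau>/2 > 0" using assms by simp
  show "(\<lambda>l. 2*\<tau>*(\<eta>*l - bq p q l)) \<in> borel_measurable borel" unfolding bq_def by measurable
  fix l :: real
  have "(\<eta>-q)*l \<le> \<bar>\<eta>-q\<bar>*\<bar>l\<bar>" by (metis abs_ge_self abs_mult)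
  hence "2*\<tau>*((\<eta>-q)*l) \<le> 2*\<tau>*(\<bar>\<eta>-q\<bar>*\<bar>l\<bar>)" using assms by simp
  thus "2*\<tau>*(\<eta>*l - bq p q l) \<le> -(\<tau>/2)*l^4 + (-\<tau>*p)*l^2 + (2*\<tau>*\<bar>\<eta>-q\<bar>)*\<bar>l\<bar> + 0"
    unfolding bq_def by (simp add: algebra_simps)
qed

lemma Nfun_nonneg: "Nfun b \<eta> \<tau> \<ge> 0"
  unfolding Nfun_def by (auto intro!: integral_nonneg)

lemma Nfun_measurable:
  "(\<lambda>v. Nfun (bq p q) (snd v) (fst v)) \<in> borel_measurable (lborel \<Otimes>\<^sub>M lborel)"
  unfolding Nfun_def bq_def by measurable

lemma lbint_lower:
  fixes f :: "real \<Rightarrow> real"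
  assumes "integrable lborel f" "\<And>l. f l \<ge> 0" "\<And>l. l \<in> {a..a+w} \<Longrightarrow> f l \<ge> c" "w \<ge> 0" "c \<ge> 0"
  shows "(LBINT l. f l) \<ge> c * w"
proof -
  have "(LBINT l. indicator {a..a+w} l * c) = c * w"
    using assms(4) by (simp add: mult.commute)
  moreover have "(LBINT l. indicator {a..a+w} l * c) \<le> (LBINT l. f l)"
  proof (rule integral_mono)
    have "integrable lborel (indicator {a..a+w} :: real \<Rightarrow> real)"
      using assms(4) by (intro integrable_real_indicator) (auto simp: emeasure_lborel_Icc)
    thus "integrable lborel (\<lambda>l. indicator {a..a+w} l * c)" by simp
    show "integrable lborel f" by fact
    fix l show "indicator {a..a+w} l * c \<le> f l" using assms(2,3)[of l] by (auto simp: indicator_def)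
  qed
  ultimately show ?thesis by linarith
qed




lemma cube_bound:
  fixes u y w R :: real
  assumes "\<bar>u\<bar> \<le> R" "\<bar>y\<bar> \<le> R" "\<bar>w\<bar> \<le> R"
  shows "abs (u*y*w) \<le> R^3"
proof -
  have "abs (u*y*w) = \<bar>u\<bar>*\<bar>y\<bar>*\<bar>w\<bar>" by (simp add: abs_mult)
  also have "\<dots> \<le> R*R*R" using assms by (intro mult_mono) auto
  finally show ?thesis by (simp add: power3_eq_cube)
qed

lemma b_bound:
  assumes "\<bar>u\<bar> \<le> R"
  shows "\<bar>bq p q u\<bar> \<le> R^4/4 + \<bar>p\<bar>*R^2/2 + \<bar>q\<bar>*R"
proof -
  have R0: "0 \<le> R" using assms by linarith
  have "\<bar>u\<bar>^4 \<le> R^4" using assms by (intro power_mono) auto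
  hence "\<bar>u^4\<bar> \<le> R^4" by (simp add: power_abs)
  moreover have "\<bar>p*u^2\<bar> \<le> \<bar>p\<bar>*R^2"
  proof -
    have "\<bar>u\<bar>^2 \<le> R^2" using assms by (intro power_mono) auto
    thus ?thesis by (simp add: abs_mult mult_left_mono)
  qed
  moreover have "\<bar>q*u\<bar> \<le> \<bar>q\<bar>*R" using assms by (simp add: abs_mult mult_left_mono)
  ultimately show ?thesis unfolding bq_def by linarith
qed

lemma abs_combo: fixes A P q X Y :: real
  shows "\<bar>A\<bar> \<le> 4*X \<Longrightarrow> \<bar>P\<bar> \<le> 2*Y \<Longrightarrow> \<bar>A/4 + P/2 + q\<bar> \<le> X + Y + \<bar>q\<bar>"
  by linarith

lemma b_lip:
  assumes "\<bar>u\<bar> \<le> R" "\<bar>y\<bar> \<le> R"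
  shows "\<bar>bq p q u - bq p q y\<bar> \<le> (R^3 + \<bar>p\<bar>*R + \<bar>q\<bar>) * \<bar>u - y\<bar>"
proof -
  have eq: "bq p q u - bq p q y = (u - y) * ((u*u*u + u*u*y + u*y*y + y*y*y)/4 + p*(u+y)/2 + q)"
    unfolding bq_def power2_eq_square power4_eq_xxxx by (simp add: field_simps)
  have "\<bar>u*u*u + u*u*y + u*y*y + y*y*y\<bar> \<le> 4*R^3"
    using cube_bound[of u R u u] cube_bound[of u R u y] cube_bound[of u R y y] cube_bound[of y R y y] assms
    by linarith
  moreover have "\<bar>p*(u+y)\<bar> \<le> \<bar>p\<bar>*(2*R)" using assms by (simp add: abs_mult mult_left_mono)
  ultimately have "\<bar>(u*u*u + u*u*y + u*y*y + y*y*y)/4 + p*(u+y)/2 + q\<bar> \<le> R^3 + \<bar>p\<bar>*R + \<bar>q\<bar>"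
    by (intro abs_combo) (auto simp: mult.commute mult.left_commute)
  hence "\<bar>(u - y)\<bar> * \<bar>(u*u*u + u*u*y + u*y*y + y*y*y)/4 + p*(u+y)/2 + q\<bar> \<le> \<bar>u - y\<bar> * (R^3 + \<bar>p\<bar>*R + \<bar>q\<bar>)"
    by (simp add: mult_left_mono)
  thus ?thesis unfolding eq abs_mult by (simp add: mult.commute)
qed




definition "RR x r = \<bar>x\<bar> + \<bar>r\<bar> + (3::real)"
definition "BB p q x r = RR x r ^4/4 + \<bar>p\<bar>*RR x r^2/2 + \<bar>q\<bar>*RR x r"
definition "EE p q x r = 4 * BB p q x r"
definition "LL p q x r = EE p q x r + (RR x r^3 + \<bar>p\<bar>*RR x r + \<bar>q\<bar>)"
definition "numf p q x r \<eta> \<tau> = exp (\<tau>*(\<eta>*(x+r) - bq p q x - bq p q r))"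

lemma RR_pos: "RR x r \<ge> 3" unfolding RR_def by simp

lemma BB_pos: "BB p q x r > 0"
proof -
  have "RR x r ^4 > 0" using RR_pos[of x r] by simp
  moreover have "\<bar>p\<bar>*RR x r^2/2 \<ge> 0" "\<bar>q\<bar>*RR x r \<ge> 0" using RR_pos[of x r] by auto
  ultimately show ?thesis unfolding BB_def by linarith
qed

lemma EE_pos: "EE p q x r > 0" using BB_pos unfolding EE_def by simp

lemma LL_nonneg: "LL p q x r \<ge> 0"
proof -
  have "RR x r ^3 \<ge> 0" using RR_pos[of x r] by simp
  thus ?thesis using EE_pos[of p q x r] RR_pos[of x r] unfolding LL_def by simp
qed

lemma Nlow_small:
  fixes p q x r \<eta> \<tau> :: real
  assumes tau: "\<tau> > 0" and eta: "\<bar>\<eta>\<bar> \<le> EE p q x r"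
  shows "Nfun (bq p q) \<eta> \<tau> \<ge> numf p q x r \<eta> \<tau> * exp (-2 * LL p q x r) / (1 + \<tau>)"
proof -
  define R where "R = RR x r"
  define E where "E = EE p q x r"
  define Lb where "Lb = R^3 + \<bar>p\<bar>*R + \<bar>q\<bar>"
  define L where "L = LL p q x r"
  have Lb0: "Lb \<ge> 0" unfolding Lb_def R_def using RR_pos[of x r] by (simp add: add_nonneg_nonneg)
  have L_def': "L = E + Lb" unfolding L_def LL_def E_def Lb_def R_def by simp
  have L0: "L \<ge> 0" unfolding L_def by (rule LL_nonneg)
  define \<phi> where "\<phi> = (\<lambda>l. \<eta>*l - bq p q l)"
  define S where "S = \<eta>*(x+r) - bq p q x - bq p q r"
  obtain \<mu> where mu: "\<mu> = x \<or> \<mu> = r" and mu2: "2 * \<phi> \<mu> \<ge> S"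
  proof (cases "\<phi> x \<ge> \<phi> r")
    case True thus ?thesis using that[of x] unfolding S_def \<phi>_def by (auto simp: algebra_simps)
  next
    case False thus ?thesis using that[of r] unfolding S_def \<phi>_def by (auto simp: algebra_simps)
  qed
  define w where "w = 1 / (1 + \<tau>)"
  have w0: "0 < w" and w1: "w \<le> 1" and tw: "\<tau> * w \<le> 1" using tau unfolding w_def by (auto simp: field_simps)
  have key: "exp (2*\<tau>*(\<eta>*l - bq p q l)) \<ge> numf p q x r \<eta> \<tau> * exp (-2 * L)" if l: "l \<in> {\<mu>..\<mu>+w}" for l
  proof -
    have mR: "\<bar>\<mu>\<bar> \<le> R" and lR: "\<bar>l\<bar> \<le> R" using mu l w1 unfolding R_def RR_def by auto
    have d0: "0 \<le> l - \<mu>" "l - \<mu> \<le> w" using l by auto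
    have "\<bar>\<eta>*(l-\<mu>)\<bar> \<le> E * w" unfolding abs_mult using eta d0 unfolding E_def
      by (intro mult_mono) auto
    moreover have "\<bar>bq p q l - bq p q \<mu>\<bar> \<le> Lb * w"
    proof -
      have "\<bar>bq p q l - bq p q \<mu>\<bar> \<le> Lb * \<bar>l - \<mu>\<bar>" using b_lip[OF lR mR, of p q] unfolding Lb_def .
      also have "\<dots> \<le> Lb * w" using d0 Lb0 by (intro mult_left_mono) auto
      finally show ?thesis .
    qed
    moreover have "\<phi> l - \<phi> \<mu> = \<eta>*(l-\<mu>) - (bq p q l - bq p q \<mu>)" unfolding \<phi>_def by (simp add: algebra_simps)
    ultimately have "\<phi> l \<ge> \<phi> \<mu> - L * w" unfolding L_def' by (simp add: algebra_simps abs_le_iff)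
    hence "\<tau> * \<phi> l \<ge> \<tau> * (\<phi> \<mu> - L * w)" using tau by (simp add: mult_left_mono)
    hence h1: "\<tau> * \<phi> \<mu> - \<tau> * (L * w) \<le> \<tau> * \<phi> l" by (simp add: right_diff_distrib)
    have h2: "\<tau> * (L * w) \<le> L" using tw L0 by (metis mult.left_commute mult_left_mono mult.right_neutral mult.commute)
    have "\<tau> * S \<le> \<tau> * (2 * \<phi> \<mu>)" using mu2 tau by (intro mult_left_mono) auto
    hence h3: "\<tau> * S \<le> 2 * (\<tau> * \<phi> \<mu>)" by simp
    have "2*(\<tau>*\<phi> l) \<ge> \<tau> * S + (-2 * L)" using h1 h2 h3 by linarith
    hence "exp (\<tau> * S + (-2 * L)) \<le> exp (2*\<tau>*\<phi> l)" by simp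
    thus ?thesis unfolding numf_def S_def \<phi>_def exp_add by (simp add: mult.assoc)
  qed
  have "Nfun (bq p q) \<eta> \<tau> \<ge> numf p q x r \<eta> \<tau> * exp (-2 * L) * w"
    unfolding Nfun_def
    by (rule lbint_lower[OF N_integrable[OF tau]]) (use key w0 in \<open>auto simp: numf_def\<close>)
  thus ?thesis unfolding w_def L_def by simp
qed

lemma Nlow_big:
  fixes p q x r \<eta> \<tau> :: real
  assumes tau: "\<tau> > 0" and eta: "\<bar>\<eta>\<bar> \<ge> EE p q x r"
  shows "Nfun (bq p q) \<eta> \<tau> \<ge> numf p q x r \<eta> \<tau> * exp (\<tau> * \<bar>\<eta>\<bar>)"
proof -
  define R where "R = RR x r"
  define Bb where "Bb = BB p q x r"
  define m where "m = (x + r)/2"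
  define S where "S = \<eta>*(x+r) - bq p q x - bq p q r"
  define a where "a = (if \<eta> \<ge> 0 then m + 1 else m - 2)"
  have EB: "EE p q x r = 4 * Bb" unfolding Bb_def EE_def by simp
  have key: "exp (2*\<tau>*(\<eta>*l - bq p q l)) \<ge> numf p q x r \<eta> \<tau> * exp (\<tau> * \<bar>\<eta>\<bar>)" if l: "l \<in> {a..a+1}" for l
  proof -
    have xR: "\<bar>x\<bar> \<le> R" and rR: "\<bar>r\<bar> \<le> R" unfolding R_def RR_def by auto
    have lR: "\<bar>l\<bar> \<le> R"
    proof (cases "\<eta> \<ge> 0")
      case True then have "m+1 \<le> l" "l \<le> m+2" using l a_def by auto
      then show ?thesis unfolding R_def RR_def m_def abs_le_iff
        using abs_ge_self[of x] abs_ge_self[of r] abs_ge_minus_self[of x] abs_ge_minus_self[of r] by (auto simp: field_simps)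
    next
      case False then have "m-2 \<le> l" "l \<le> m-1" using l a_def by auto
      then show ?thesis unfolding R_def RR_def m_def abs_le_iff
        using abs_ge_self[of x] abs_ge_self[of r] abs_ge_minus_self[of x] abs_ge_minus_self[of r] by (auto simp: field_simps)
    qed
    have bx: "\<bar>bq p q x\<bar> \<le> Bb" and br: "\<bar>bq p q r\<bar> \<le> Bb" and bl: "\<bar>bq p q l\<bar> \<le> Bb"
      using b_bound[OF xR, of p q] b_bound[OF rR, of p q] b_bound[OF lR, of p q]
      unfolding Bb_def BB_def R_def by auto
    have eh: "\<eta>*(l - m) \<ge> \<bar>\<eta>\<bar>"
    proof (cases "\<eta> \<ge> 0")
      case True
      hence "l - m \<ge> 1" using l unfolding a_def by auto
      hence "\<eta>*(l-m) \<ge> \<eta>*1" using True by (intro mult_left_mono) auto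
      thus ?thesis using True by simp
    next
      case False
      hence "m - l \<ge> 1" using l unfolding a_def by auto
      hence "(-\<eta>)*(m-l) \<ge> (-\<eta>)*1" using False by (intro mult_left_mono) auto
      thus ?thesis using False by (simp add: algebra_simps)
    qed
    have "2*(\<eta>*l - bq p q l) - S = 2*(\<eta>*(l-m)) - 2*bq p q l + bq p q x + bq p q r"
      unfolding S_def m_def by (simp add: algebra_simps)
    hence "2*(\<eta>*l - bq p q l) \<ge> S + \<bar>\<eta>\<bar>" using eh bx br bl eta EB by (simp add: abs_le_iff) linarith
    hence "\<tau>*(2*(\<eta>*l - bq p q l)) \<ge> \<tau>*(S + \<bar>\<eta>\<bar>)" using tau by (simp add: mult_left_mono)
    hence "exp (\<tau>*S + \<tau>*\<bar>\<eta>\<bar>) \<le> exp (2*\<tau>*(\<eta>*l - bq p q l))" by (simp add: algebra_simps)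
    thus ?thesis unfolding numf_def S_def exp_add by simp
  qed
  have "Nfun (bq p q) \<eta> \<tau> \<ge> numf p q x r \<eta> \<tau> * exp (\<tau> * \<bar>\<eta>\<bar>) * 1"
    unfolding Nfun_def
    by (rule lbint_lower[OF N_integrable[OF tau]]) (use key in \<open>auto simp: numf_def\<close>)
  thus ?thesis by simp
qed




definition "Fd p q x r \<delta> \<tau> \<eta> = \<tau> * exp (\<tau>*(\<eta>*(x+r) - bq p q x - bq p q r - \<delta>)) / Nfun (bq p q) \<eta> \<tau>"

lemma numf_pos: "numf p q x r \<eta> \<tau> > 0" unfolding numf_def by simp

lemma N_pos:
  assumes "\<tau> > 0" shows "Nfun (bq p q) \<eta> \<tau> > 0"
proof (cases "\<bar>\<eta>\<bar> \<le> EE p q x r")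
  case True
  have "numf p q x r \<eta> \<tau> * exp (-2 * LL p q x r) / (1 + \<tau>) > 0" using assms numf_pos by simp
  with Nlow_small[OF assms True] show ?thesis by linarith
next
  case False
  have "numf p q x r \<eta> \<tau> * exp (\<tau> * \<bar>\<eta>\<bar>) > 0" using assms numf_pos by simp
  with Nlow_big[where p=p and q=q and x=x and r=r and \<eta>=\<eta>, OF assms] False show ?thesis by linarith
qed

lemma Fd_eq: "Fd p q x r \<delta> \<tau> \<eta> = \<tau> * exp (- (\<delta> * \<tau>)) * (numf p q x r \<eta> \<tau> / Nfun (bq p q) \<eta> \<tau>)"
  unfolding Fd_def numf_def by (simp add: algebra_simps exp_diff exp_minus exp_add field_simps)

lemma Fd_nonneg: assumes "\<tau> > 0" shows "Fd p q x r \<delta> \<tau> \<eta> \<ge> 0"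
  unfolding Fd_def using N_pos[OF assms, of p q \<eta>] assms by simp

definition "Gd p q x r \<delta> \<tau> \<eta> = (if \<tau> > 0 then
   (if \<bar>\<eta>\<bar> \<le> EE p q x r then \<tau>*(1+\<tau>)*exp (2*LL p q x r)*exp (-(\<delta>*\<tau>))
    else \<tau>*exp (-(\<delta>*\<tau>))*exp (-(\<tau>*\<bar>\<eta>\<bar>))) else 0)"

lemma Fd_up:
  assumes tau: "\<tau> > 0" shows "Fd p q x r \<delta> \<tau> \<eta> \<le> Gd p q x r \<delta> \<tau> \<eta>"
proof -
  have Np: "Nfun (bq p q) \<eta> \<tau> > 0" by (rule N_pos[OF tau])
  have c0: "\<tau> * exp (- (\<delta> * \<tau>)) \<ge> 0" using tau by simp
  show ?thesis
  proof (cases "\<bar>\<eta>\<bar> \<le> EE p q x r")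
    case True
    have "numf p q x r \<eta> \<tau> \<le> ((1+\<tau>) * exp (2*LL p q x r)) * Nfun (bq p q) \<eta> \<tau>"
    proof -
      have "numf p q x r \<eta> \<tau> * exp (-2 * LL p q x r) / (1 + \<tau>) \<le> Nfun (bq p q) \<eta> \<tau>"
        by (rule Nlow_small[OF tau True])
      hence "numf p q x r \<eta> \<tau> * exp (-2 * LL p q x r) \<le> (1+\<tau>) * Nfun (bq p q) \<eta> \<tau>"
        using tau by (simp add: divide_le_eq mult.commute)
      hence "numf p q x r \<eta> \<tau> * exp (-2 * LL p q x r) * exp (2*LL p q x r) \<le> (1+\<tau>) * Nfun (bq p q) \<eta> \<tau> * exp (2*LL p q x r)"
        by (simp add: mult_right_mono)
      thus ?thesis by (simp add: mult.assoc mult.commute mult.left_commute exp_minus field_simps)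
    qed
    hence "numf p q x r \<eta> \<tau> / Nfun (bq p q) \<eta> \<tau> \<le> (1+\<tau>) * exp (2*LL p q x r)"
      using Np by (simp add: divide_le_eq)
    hence "\<tau> * exp (- (\<delta> * \<tau>)) * (numf p q x r \<eta> \<tau> / Nfun (bq p q) \<eta> \<tau>) \<le> \<tau> * exp (- (\<delta> * \<tau>)) * ((1+\<tau>) * exp (2*LL p q x r))"
      using c0 by (rule mult_left_mono)
    thus ?thesis unfolding Fd_eq Gd_def using True tau by (simp add: algebra_simps)
  next
    case False
    have "numf p q x r \<eta> \<tau> \<le> exp (-(\<tau>*\<bar>\<eta>\<bar>)) * Nfun (bq p q) \<eta> \<tau>"
    proof -
      have "numf p q x r \<eta> \<tau> * exp (\<tau> * \<bar>\<eta>\<bar>) \<le> Nfun (bq p q) \<eta> \<tau>"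
        using Nlow_big[where p=p and q=q and x=x and r=r and \<eta>=\<eta>, OF tau] False by simp
      hence "numf p q x r \<eta> \<tau> \<le> Nfun (bq p q) \<eta> \<tau> / exp (\<tau> * \<bar>\<eta>\<bar>)"
        by (simp add: pos_le_divide_eq)
      thus ?thesis by (simp add: exp_minus divide_inverse mult.commute)
    qed
    hence "numf p q x r \<eta> \<tau> / Nfun (bq p q) \<eta> \<tau> \<le> exp (-(\<tau>*\<bar>\<eta>\<bar>))"
      using Np by (simp add: divide_le_eq)
    hence "\<tau> * exp (- (\<delta> * \<tau>)) * (numf p q x r \<eta> \<tau> / Nfun (bq p q) \<eta> \<tau>) \<le> \<tau> * exp (- (\<delta> * \<tau>)) * exp (-(\<tau>*\<bar>\<eta>\<bar>))"
      using c0 by (rule mult_left_mono)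
    thus ?thesis unfolding Fd_eq Gd_def using False tau by (simp add: algebra_simps)
  qed
qed




lemma exp_abs_scaled:
  fixes a :: real assumes a: "a > 0"
  shows "ennreal a * (\<integral>\<^sup>+x. ennreal (exp (-(a*\<bar>x\<bar>))) \<partial>lborel) \<le> 2"
proof -
  define f where "f = (\<lambda>x::real. ennreal (exp (- \<bar>x\<bar>)))"
  have fm: "f \<in> borel_measurable borel" unfolding f_def by measurable
  have "(\<integral>\<^sup>+x. f x \<partial>lborel) = ennreal \<bar>a\<bar> * (\<integral>\<^sup>+x. f (0 + a * x) \<partial>lborel)"
    using nn_integral_real_affine[OF fm, of a 0] a by simp
  also have "(\<lambda>x. f (0 + a * x)) = (\<lambda>x. ennreal (exp (-(a*\<bar>x\<bar>))))"
    unfolding f_def using a by (auto simp: abs_mult)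
  finally have "ennreal a * (\<integral>\<^sup>+x. ennreal (exp (-(a*\<bar>x\<bar>))) \<partial>lborel) = (\<integral>\<^sup>+x. f x \<partial>lborel)"
    using a by simp
  also have "\<dots> \<le> 2" unfolding f_def by (rule nn_exp_abs_le2)
  finally show ?thesis .
qed

lemma tau_poly:
  fixes \<delta> \<tau> :: real assumes d: "\<delta> > 0" and t: "\<tau> \<ge> 0"
  shows "\<tau>*(1+\<tau>)*exp (-(\<delta>*\<tau>)) \<le> (2/\<delta> + 16/\<delta>^2) * exp (-((\<delta>/2)*\<tau>))"
proof -
  define s where "s = \<delta>*\<tau>/2"
  have s0: "s \<ge> 0" using d t unfolding s_def by simp
  have e1: "s \<le> exp s" using exp_ge_add_one_self[of s] by linarith
  have "s/2 \<le> exp (s/2)" using exp_ge_add_one_self[of "s/2"] by linarith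
  hence "(s/2)^2 \<le> exp (s/2) ^2" using s0 by (intro power_mono) auto
  also have "exp (s/2) ^2 = exp s" by (simp add: power2_eq_square exp_add[symmetric])
  finally have e2: "s^2/4 \<le> exp s" by (simp add: power_divide)
  have tau1: "\<tau> = (2/\<delta>) * s" using d unfolding s_def by simp
  have tau2: "\<tau>^2 = (16/\<delta>^2) * (s^2/4)" using d unfolding s_def by (simp add: power2_eq_square field_simps)
  have "\<tau> \<le> (2/\<delta>) * exp s" unfolding tau1 using e1 d by (intro mult_left_mono) auto
  moreover have "\<tau>^2 \<le> (16/\<delta>^2) * exp s" unfolding tau2 using e2 d by (intro mult_left_mono) auto
  ultimately have "\<tau>*(1+\<tau>) \<le> (2/\<delta> + 16/\<delta>^2) * exp s"
    by (simp add: algebra_simps power2_eq_square)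
  hence "\<tau>*(1+\<tau>)*exp (-(\<delta>*\<tau>)) \<le> (2/\<delta> + 16/\<delta>^2) * exp s * exp (-(\<delta>*\<tau>))"
    by (simp add: mult_right_mono)
  also have "\<dots> = (2/\<delta> + 16/\<delta>^2) * (exp s * exp (-(\<delta>*\<tau>)))" by simp
  also have "exp s * exp (-(\<delta>*\<tau>)) = exp (-((\<delta>/2)*\<tau>))"
    unfolding s_def exp_add[symmetric] by (simp add: field_simps)
  finally show ?thesis .
qed

lemma Gd_measurable[measurable]:
  "(\<lambda>v. Gd p q x r \<delta> (fst v) (snd v)) \<in> borel_measurable (lborel \<Otimes>\<^sub>M lborel)"
  unfolding Gd_def by measurable

lemma Gd_inner:
  assumes tau: "\<tau> > 0"
  shows "(\<integral>\<^sup>+\<eta>. ennreal (Gd p q x r \<delta> \<tau> \<eta>) \<partial>lborel)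
     \<le> ennreal (2*EE p q x r * (\<tau>*(1+\<tau>)*exp (2*LL p q x r)*exp (-(\<delta>*\<tau>))) + 2*exp (-(\<delta>*\<tau>)))"
proof -
  define E where "E = EE p q x r"
  define A where "A = \<tau>*(1+\<tau>)*exp (2*LL p q x r)*exp (-(\<delta>*\<tau>))"
  define B where "B = \<tau>*exp (-(\<delta>*\<tau>))"
  have E0: "E > 0" unfolding E_def by (rule EE_pos)
  have A0: "A \<ge> 0" and B0: "B \<ge> 0" using tau unfolding A_def B_def by auto
  have "(\<integral>\<^sup>+\<eta>. ennreal (Gd p q x r \<delta> \<tau> \<eta>) \<partial>lborel)
      \<le> (\<integral>\<^sup>+\<eta>. ennreal A * indicator {-E..E} \<eta> + ennreal B * ennreal (exp (-(\<tau>*\<bar>\<eta>\<bar>))) \<partial>lborel)"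
  proof (rule nn_integral_mono)
    fix \<eta> :: real
    show "ennreal (Gd p q x r \<delta> \<tau> \<eta>) \<le> ennreal A * indicator {-E..E} \<eta> + ennreal B * ennreal (exp (-(\<tau>*\<bar>\<eta>\<bar>)))"
      unfolding Gd_def using tau A0 B0
      by (auto simp: A_def B_def E_def indicator_def ennreal_mult'[symmetric] abs_le_iff)
  qed
  also have "\<dots> = (\<integral>\<^sup>+\<eta>. ennreal A * indicator {-E..E} \<eta> \<partial>lborel) + (\<integral>\<^sup>+\<eta>. ennreal B * ennreal (exp (-(\<tau>*\<bar>\<eta>\<bar>))) \<partial>lborel)"
    by (intro nn_integral_add) auto
  also have "(\<integral>\<^sup>+\<eta>. ennreal A * indicator {-E..E} \<eta> \<partial>lborel) = ennreal A * ennreal (2*E)"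
    using E0 by (subst nn_integral_cmult_indicator) (auto simp: emeasure_lborel_Icc)
  also have "(\<integral>\<^sup>+\<eta>. ennreal B * ennreal (exp (-(\<tau>*\<bar>\<eta>\<bar>))) \<partial>lborel) = ennreal B * (\<integral>\<^sup>+\<eta>. ennreal (exp (-(\<tau>*\<bar>\<eta>\<bar>))) \<partial>lborel)"
    by (rule nn_integral_cmult) measurable
  also have "\<dots> = ennreal (exp (-(\<delta>*\<tau>))) * (ennreal \<tau> * (\<integral>\<^sup>+\<eta>. ennreal (exp (-(\<tau>*\<bar>\<eta>\<bar>))) \<partial>lborel))"
    unfolding B_def using tau by (simp add: ennreal_mult mult_ac)
  also have "\<dots> \<le> ennreal (exp (-(\<delta>*\<tau>))) * 2"
    using exp_abs_scaled[OF tau] by (rule mult_left_mono) simp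
  also have "ennreal A * ennreal (2*E) + ennreal (exp (-(\<delta>*\<tau>))) * 2 = ennreal (2*E*A + 2*exp (-(\<delta>*\<tau>)))"
  proof -
    have h1: "ennreal A * ennreal (2*E) = ennreal (2*E*A)" using A0 E0 by (simp add: ennreal_mult[symmetric] mult_ac)
    have h2: "ennreal (exp (-(\<delta>*\<tau>))) * 2 = ennreal (2*exp (-(\<delta>*\<tau>)))"
      by (simp add: ennreal_mult mult.commute)
    have h3: "ennreal (2*E*A) + ennreal (2*exp (-(\<delta>*\<tau>))) = ennreal (2*E*A + 2*exp (-(\<delta>*\<tau>)))"
      using A0 E0 by (intro ennreal_plus[symmetric]) auto
    show ?thesis unfolding h1 h2 h3 ..
  qed
  finally show ?thesis unfolding A_def E_def by (simp add: add_left_mono)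
qed




lemma Gd_total_finite:
  assumes d: "\<delta> > 0"
  shows "(\<integral>\<^sup>+v. ennreal (Gd p q x r \<delta> (fst v) (snd v)) \<partial>(lborel \<Otimes>\<^sub>M lborel)) < \<infinity>"
proof -
  define E where "E = EE p q x r"
  define L where "L = LL p q x r"
  define C where "C = 2/\<delta> + 16/\<delta>^2"
  define K where "K = 2*E*exp (2*L)*C + 2"
  have E0: "E > 0" unfolding E_def by (rule EE_pos)
  have C0: "C \<ge> 0" using d unfolding C_def by simp
  have "(\<integral>\<^sup>+v. ennreal (Gd p q x r \<delta> (fst v) (snd v)) \<partial>(lborel \<Otimes>\<^sub>M lborel))
      = (\<integral>\<^sup>+\<tau>. (\<integral>\<^sup>+\<eta>. ennreal (Gd p q x r \<delta> \<tau> \<eta>) \<partial>lborel) \<partial>lborel)"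
    by (subst lborel.nn_integral_fst[symmetric]) auto
  also have "\<dots> \<le> (\<integral>\<^sup>+\<tau>. ennreal K * ennreal (exp (-((\<delta>/2)*\<bar>\<tau>\<bar>))) \<partial>lborel)"
  proof (rule nn_integral_mono)
    fix \<tau> :: real
    show "(\<integral>\<^sup>+\<eta>. ennreal (Gd p q x r \<delta> \<tau> \<eta>) \<partial>lborel) \<le> ennreal K * ennreal (exp (-((\<delta>/2)*\<bar>\<tau>\<bar>)))"
    proof (cases "\<tau> > 0")
      case False
      hence "(\<lambda>\<eta>. ennreal (Gd p q x r \<delta> \<tau> \<eta>)) = (\<lambda>\<eta>. 0)" unfolding Gd_def by auto
      thus ?thesis by simp
    next
      case True
      have "2*E*(\<tau>*(1+\<tau>)*exp (2*L)*exp (-(\<delta>*\<tau>))) + 2*exp (-(\<delta>*\<tau>)) \<le> K * exp (-((\<delta>/2)*\<bar>\<tau>\<bar>))"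
      proof -
        have "\<tau>*(1+\<tau>)*exp (-(\<delta>*\<tau>)) \<le> C * exp (-((\<delta>/2)*\<tau>))"
          unfolding C_def using tau_poly[OF d, of \<tau>] True by simp
        hence "(2*E*exp (2*L)) * (\<tau>*(1+\<tau>)*exp (-(\<delta>*\<tau>))) \<le> (2*E*exp (2*L)) * (C * exp (-((\<delta>/2)*\<tau>)))"
          using E0 by (intro mult_left_mono) auto
        moreover have "exp (-(\<delta>*\<tau>)) \<le> exp (-((\<delta>/2)*\<tau>))" using d True by simp
        moreover have "2*E*(\<tau>*(1+\<tau>)*exp (2*L)*exp (-(\<delta>*\<tau>))) = (2*E*exp (2*L)) * (\<tau>*(1+\<tau>)*exp (-(\<delta>*\<tau>)))"
          by (simp add: mult_ac)
        moreover have "K * exp (-((\<delta>/2)*\<bar>\<tau>\<bar>)) = (2*E*exp (2*L)) * (C * exp (-((\<delta>/2)*\<tau>))) + 2*exp (-((\<delta>/2)*\<tau>))"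
          using True unfolding K_def by (simp add: algebra_simps)
        ultimately show ?thesis by linarith
      qed
      hence "ennreal (2*E*(\<tau>*(1+\<tau>)*exp (2*L)*exp (-(\<delta>*\<tau>))) + 2*exp (-(\<delta>*\<tau>))) \<le> ennreal (K * exp (-((\<delta>/2)*\<bar>\<tau>\<bar>)))"
        by (rule ennreal_leI)
      also have "\<dots> = ennreal K * ennreal (exp (-((\<delta>/2)*\<bar>\<tau>\<bar>)))"
        using E0 C0 unfolding K_def by (intro ennreal_mult) auto
      finally show ?thesis using Gd_inner[OF True, of p q x r \<delta>] unfolding E_def L_def by simp
    qed
  qed
  also have "\<dots> = ennreal K * (\<integral>\<^sup>+\<tau>. ennreal (exp (-((\<delta>/2)*\<bar>\<tau>\<bar>))) \<partial>lborel)"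
    by (rule nn_integral_cmult) measurable
  also have "\<dots> < \<infinity>"
  proof -
    have "ennreal (\<delta>/2) * (\<integral>\<^sup>+\<tau>. ennreal (exp (-((\<delta>/2)*\<bar>\<tau>\<bar>))) \<partial>lborel) \<le> 2"
      using exp_abs_scaled[of "\<delta>/2"] d by simp
    hence "(\<integral>\<^sup>+\<tau>. ennreal (exp (-((\<delta>/2)*\<bar>\<tau>\<bar>))) \<partial>lborel) \<noteq> \<infinity>"
      using d by (auto simp: ennreal_mult_top top_unique)
    thus ?thesis by (simp add: ennreal_mult_less_top less_top)
  qed
  finally show ?thesis .
qed

lemma Fd_measurable[measurable]:
  "(\<lambda>v. Fd p q x r \<delta> (fst v) (snd v)) \<in> borel_measurable (lborel \<Otimes>\<^sub>M lborel)"
  unfolding Fd_def Nfun_def bq_def by measurable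

lemma F_integrable:
  assumes d: "\<delta> > 0"
  shows "integrable (lborel \<Otimes>\<^sub>M lborel) (\<lambda>v. indicator {v. fst v > 0} v * Fd p q x r \<delta> (fst v) (snd v))"
proof (rule integrableI_bounded)
  have "{v::real\<times>real. fst v > 0} = {0<..} \<times> UNIV" by auto
  also have "\<dots> \<in> sets (lborel \<Otimes>\<^sub>M lborel)" by (intro pair_measureI) auto
  finally have [measurable]: "{v::real\<times>real. fst v > 0} \<in> sets (lborel \<Otimes>\<^sub>M lborel)" .
  show "(\<lambda>v. indicator {v. fst v > 0} v * Fd p q x r \<delta> (fst v) (snd v)) \<in> borel_measurable (lborel \<Otimes>\<^sub>M lborel)"
    by measurable
  have "(\<integral>\<^sup>+v. ennreal (norm (indicator {v. fst v > 0} v * Fd p q x r \<delta> (fst v) (snd v))) \<partial>(lborel \<Otimes>\<^sub>M lborel))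
     \<le> (\<integral>\<^sup>+v. ennreal (Gd p q x r \<delta> (fst v) (snd v)) \<partial>(lborel \<Otimes>\<^sub>M lborel))"
  proof (rule nn_integral_mono)
    fix v :: "real \<times> real"
    obtain \<tau> \<eta> where v: "v = (\<tau>, \<eta>)" by (cases v)
    show "ennreal (norm (indicator {v. fst v > 0} v * Fd p q x r \<delta> (fst v) (snd v))) \<le> ennreal (Gd p q x r \<delta> (fst v) (snd v))"
    proof (cases "\<tau> > 0")
      case True
      thus ?thesis using Fd_nonneg[OF True, of p q x r \<delta> \<eta>] Fd_up[OF True, of p q x r \<delta> \<eta>] v
        by (auto intro!: ennreal_leI)
    next
      case False thus ?thesis using v by (auto simp: Gd_def)
    qed
  qed
  also have "\<dots> < \<infinity>" by (rule Gd_total_finite[OF d])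
  finally show "(\<integral>\<^sup>+v. ennreal (norm (indicator {v. fst v > 0} v * Fd p q x r \<delta> (fst v) (snd v))) \<partial>(lborel \<Otimes>\<^sub>M lborel)) < \<infinity>" .
qed




lemma tangent_exists:
  fixes p q x r :: real
  assumes hp: "p < 0"
    and hxr: "(x = r \<and> \<bar>x\<bar> > sqrt (- p)) \<or> (\<bar>x\<bar> = sqrt (- p) \<and> \<bar>r\<bar> = sqrt (- p))"
  shows "\<exists>\<eta>0. bq p q r = bq p q x + \<eta>0*(r - x) \<and> (\<forall>l. bq p q l - bq p q x - \<eta>0*(l - x) \<ge> 0)"
proof -
  have sq: "sqrt (-p) ^2 = -p" using hp by simp
  have c1: "x = r \<and> x^2 \<ge> -p \<or> r = -x \<and> x^2 = -p"
  proof (cases "x = r \<and> \<bar>x\<bar> > sqrt (- p)")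
    case True
    hence "sqrt (-p)^2 \<le> \<bar>x\<bar>^2" using hp by (intro power_mono) auto
    thus ?thesis using True sq by simp
  next
    case False
    hence h: "\<bar>x\<bar> = sqrt (- p)" "\<bar>r\<bar> = sqrt (- p)" using hxr by auto
    hence "x^2 = -p" using sq by (metis power2_abs)
    moreover have "r = x \<or> r = -x" using h by (cases "x \<ge> 0"; cases "r \<ge> 0") auto
    ultimately show ?thesis by auto
  qed
  show ?thesis
  proof (cases "x = r \<and> x^2 \<ge> -p")
    case True
    define \<eta>0 where "\<eta>0 = x^3 + p*x + q"
    have "\<forall>l. bq p q l - bq p q x - \<eta>0*(l - x) \<ge> 0"
    proof
      fix l :: real
      have eq: "bq p q l - bq p q x - \<eta>0*(l - x) = (l-x)^2 * (((l+x)^2 + 2*x^2 + 2*p)/4)"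
        unfolding bq_def \<eta>0_def by (simp add: field_simps power2_eq_square power3_eq_cube power4_eq_xxxx)
      have "(l+x)^2 \<ge> 0" by simp
      hence "(l+x)^2 + 2*x^2 + 2*p \<ge> 0" using True by linarith
      hence "((l+x)^2 + 2*x^2 + 2*p)/4 \<ge> 0" by simp
      thus "bq p q l - bq p q x - \<eta>0*(l - x) \<ge> 0" unfolding eq by simp
    qed
    thus ?thesis using True by auto
  next
    case False
    hence F: "r = -x" "x^2 = -p" using c1 by auto
    have "\<forall>l. bq p q l - bq p q x - q*(l - x) \<ge> 0"
    proof
      fix l :: real
      have eq: "bq p q l - bq p q x - q*(l - x) = (l^2 - x^2)^2/4"
        unfolding bq_def using F(2)
        by (simp add: field_simps power2_eq_square power4_eq_xxxx)
      show "bq p q l - bq p q x - q*(l - x) \<ge> 0" unfolding eq by simp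
    qed
    moreover have "bq p q r = bq p q x + q*(r - x)"
      unfolding bq_def F(1) by (simp add: field_simps power2_eq_square power4_eq_xxxx)
    ultimately show ?thesis by blast
  qed
qed




lemma N_upper:
  fixes p q x r \<eta>0 :: real
  assumes sec: "bq p q r = bq p q x + \<eta>0*(r - x)"
    and g0: "\<forall>l. bq p q l - bq p q x - \<eta>0*(l - x) \<ge> 0"
  shows "\<exists>Cc>0. \<forall>\<tau> \<eta>. 1 \<le> \<tau> \<longrightarrow> \<bar>\<eta> - \<eta>0\<bar>*\<tau> \<le> 1 \<longrightarrow> Nfun (bq p q) \<eta> \<tau> \<le> Cc * numf p q x r \<eta> \<tau>"
proof -
  define m where "m = (x + r)/2"
  define g where "g = (\<lambda>l. bq p q l - bq p q x - \<eta>0*(l - x))"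
  define f where "f = (\<lambda>l. 2*\<bar>l - m\<bar> - 2 * g l)"
  have fb: "f l \<le> -(1/2)*l^4 + (-p)*l^2 + (2 + 2*\<bar>q-\<eta>0\<bar>)*\<bar>l\<bar> + (2*\<bar>m\<bar> + 2*bq p q x - 2*\<eta>0*x)" for l
  proof -
    have "-(2*((q-\<eta>0)*l)) \<le> 2*(\<bar>q-\<eta>0\<bar>*\<bar>l\<bar>)"
    proof -
      have "-((q-\<eta>0)*l) \<le> \<bar>(q-\<eta>0)*l\<bar>" by simp
      thus ?thesis using abs_mult[of "q-\<eta>0" l] by linarith
    qed
    moreover have "\<bar>l - m\<bar> \<le> \<bar>l\<bar> + \<bar>m\<bar>" by (rule abs_triangle_ineq4)
    moreover have "f l = 2*\<bar>l - m\<bar> - (1/2)*l^4 - p*l^2 - 2*((q-\<eta>0)*l) + 2*bq p q x - 2*\<eta>0*x"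
      unfolding f_def g_def bq_def by (simp add: algebra_simps)
    ultimately show ?thesis by (simp add: algebra_simps)
  qed
  obtain K where K: "\<And>l. exp (f l) \<le> K * exp (- \<bar>l\<bar>)"
    using exp_poly_bound[of "1/2" f "-p" "2 + 2*\<bar>q-\<eta>0\<bar>" "2*\<bar>m\<bar> + 2*bq p q x - 2*\<eta>0*x", OF _ fb] by auto
  define V where "V = (LBINT l. exp (- \<bar>l::real\<bar>))"
  have V0: "V \<ge> 0" unfolding V_def by (auto intro!: integral_nonneg)
  define Cc where "Cc = \<bar>K\<bar> * V + 1"
  have Cc0: "Cc > 0" unfolding Cc_def using V0 by (simp add: add_nonneg_pos)
  have "Nfun (bq p q) \<eta> \<tau> \<le> Cc * numf p q x r \<eta> \<tau>" if t1: "1 \<le> \<tau>" and te: "\<bar>\<eta> - \<eta>0\<bar>*\<tau> \<le> 1" for \<tau> \<eta>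
  proof -
    have tau: "\<tau> > 0" using t1 by simp
    define S where "S = \<tau>*(\<eta>*(x+r) - bq p q x - bq p q r)"
    have pw: "exp (2*\<tau>*(\<eta>*l - bq p q l)) \<le> numf p q x r \<eta> \<tau> * (\<bar>K\<bar> * exp (- \<bar>l\<bar>))" for l
    proof -
      have ident: "2*\<tau>*(\<eta>*l - bq p q l) = S + 2*(\<tau>*(\<eta>-\<eta>0)*(l-m)) - 2*(\<tau> * g l)"
        unfolding S_def m_def g_def sec by (simp add: field_simps)
      have a1: "\<tau>*(\<eta>-\<eta>0)*(l-m) \<le> \<bar>l - m\<bar>"
      proof -
        have "\<tau>*(\<eta>-\<eta>0)*(l-m) \<le> \<bar>\<tau>*(\<eta>-\<eta>0)\<bar>*\<bar>l-m\<bar>" by (metis abs_ge_self abs_mult)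
        also have "\<bar>\<tau>*(\<eta>-\<eta>0)\<bar> \<le> 1" using te tau by (simp add: abs_mult mult.commute)
        hence "\<bar>\<tau>*(\<eta>-\<eta>0)\<bar>*\<bar>l-m\<bar> \<le> 1 * \<bar>l-m\<bar>" by (intro mult_right_mono) auto
        finally show ?thesis by simp
      qed
      have a2: "\<tau> * g l \<ge> 1 * g l" using t1 g0 unfolding g_def by (intro mult_right_mono) auto
      have "2*\<tau>*(\<eta>*l - bq p q l) \<le> S + f l" unfolding ident f_def using a1 a2 by simp
      hence "exp (2*\<tau>*(\<eta>*l - bq p q l)) \<le> exp S * exp (f l)" by (simp add: exp_add[symmetric])
      also have "\<dots> \<le> exp S * (\<bar>K\<bar> * exp (- \<bar>l\<bar>))"
        using K[of l] by (intro mult_left_mono) (auto intro: order_trans[OF _ mult_right_mono[OF abs_ge_self]])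
      finally show ?thesis unfolding numf_def S_def .
    qed
    have "Nfun (bq p q) \<eta> \<tau> \<le> (LBINT l. numf p q x r \<eta> \<tau> * (\<bar>K\<bar> * exp (- \<bar>l\<bar>)))"
      unfolding Nfun_def
      by (rule integral_mono[OF N_integrable[OF tau] _ pw]) (use integrable_exp_abs in simp)
    also have "\<dots> = numf p q x r \<eta> \<tau> * (\<bar>K\<bar> * V)" unfolding V_def by simp
    also have "\<dots> \<le> numf p q x r \<eta> \<tau> * Cc" unfolding Cc_def using numf_pos[of p q x r \<eta> \<tau>]
      by (intro mult_left_mono) auto
    finally show ?thesis by (simp add: mult.commute)
  qed
  thus ?thesis using Cc0 by blast
qed

lemma Fd_lower:
  assumes Cc0: "Cc > 0"
    and NU: "Nfun (bq p q) \<eta> \<tau> \<le> Cc * numf p q x r \<eta> \<tau>"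
    and t1: "1 \<le> \<tau>" and d0: "0 \<le> \<delta>" and dt: "\<delta>*\<tau> \<le> 1"
  shows "Fd p q x r \<delta> \<tau> \<eta> \<ge> \<tau> * exp (-1) / Cc"
proof -
  have tau: "\<tau> > 0" using t1 by simp
  have Np: "Nfun (bq p q) \<eta> \<tau> > 0" by (rule N_pos[OF tau])
  have r1: "1 / Cc \<le> numf p q x r \<eta> \<tau> / Nfun (bq p q) \<eta> \<tau>"
    using NU Np Cc0 by (simp add: divide_le_eq le_divide_eq mult.commute)
  have r2: "exp (-1) \<le> exp (- (\<delta>*\<tau>))" using dt by simp
  have "\<tau> * exp (-1) * (1 / Cc) \<le> \<tau> * exp (- (\<delta>*\<tau>)) * (numf p q x r \<eta> \<tau> / Nfun (bq p q) \<eta> \<tau>)"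
    using r1 r2 tau Cc0 by (intro mult_mono) auto
  thus ?thesis unfolding Fd_eq by simp
qed

definition "Hf Cc \<eta>0 T \<tau> \<eta> = (if 1 \<le> \<tau> \<and> \<tau> \<le> T \<and> \<bar>\<eta> - \<eta>0\<bar>*\<tau> \<le> 1 then \<tau> * exp (-1) / Cc else (0::real))"

lemma Hf_measurable[measurable]:
  "(\<lambda>v. Hf Cc \<eta>0 T (fst v) (snd v)) \<in> borel_measurable (lborel \<Otimes>\<^sub>M lborel)"
  unfolding Hf_def by measurable

lemma H_integral:
  assumes Cc0: "Cc > 0" and T1: "T \<ge> 1"
  shows "(\<integral>\<^sup>+v. ennreal (Hf Cc \<eta>0 T (fst v) (snd v)) \<partial>(lborel \<Otimes>\<^sub>M lborel)) = ennreal (2*exp (-1)/Cc) * ennreal (T - 1)"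
proof -
  have inner: "(\<integral>\<^sup>+\<eta>. ennreal (Hf Cc \<eta>0 T \<tau> \<eta>) \<partial>lborel) = ennreal (2*exp (-1)/Cc) * indicator {1..T} \<tau>" for \<tau>
  proof (cases "1 \<le> \<tau> \<and> \<tau> \<le> T")
    case True
    hence tau: "\<tau> > 0" by auto
    have "(\<lambda>\<eta>. ennreal (Hf Cc \<eta>0 T \<tau> \<eta>)) = (\<lambda>\<eta>. ennreal (\<tau> * exp (-1) / Cc) * indicator {\<eta>0 - 1/\<tau> .. \<eta>0 + 1/\<tau>} \<eta>)"
    proof
      fix \<eta>
      have "(\<bar>\<eta> - \<eta>0\<bar>*\<tau> \<le> 1) = (\<bar>\<eta> - \<eta>0\<bar> \<le> 1/\<tau>)"
        using tau by (simp add: le_divide_eq)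
      also have "\<dots> = (\<eta> \<in> {\<eta>0 - 1/\<tau> .. \<eta>0 + 1/\<tau>})" by (auto simp: abs_le_iff)
      finally have "(\<bar>\<eta> - \<eta>0\<bar>*\<tau> \<le> 1) = (\<eta> \<in> {\<eta>0 - 1/\<tau> .. \<eta>0 + 1/\<tau>})" .
      thus "ennreal (Hf Cc \<eta>0 T \<tau> \<eta>) = ennreal (\<tau> * exp (-1) / Cc) * indicator {\<eta>0 - 1/\<tau> .. \<eta>0 + 1/\<tau>} \<eta>"
        unfolding Hf_def using True by (auto simp: indicator_def)
    qed
    hence "(\<integral>\<^sup>+\<eta>. ennreal (Hf Cc \<eta>0 T \<tau> \<eta>) \<partial>lborel) = ennreal (\<tau> * exp (-1) / Cc) * ennreal (2/\<tau>)"
      using tau by (simp add: nn_integral_cmult_indicator emeasure_lborel_Icc)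
    also have "\<dots> = ennreal (2*exp (-1)/Cc)"
      using tau Cc0 by (simp add: ennreal_mult[symmetric])
    finally show ?thesis using True by simp
  next
    case False
    hence "(\<lambda>\<eta>. ennreal (Hf Cc \<eta>0 T \<tau> \<eta>)) = (\<lambda>\<eta>. 0)" unfolding Hf_def by auto
    thus ?thesis using False by simp
  qed
  have "(\<integral>\<^sup>+v. ennreal (Hf Cc \<eta>0 T (fst v) (snd v)) \<partial>(lborel \<Otimes>\<^sub>M lborel))
      = (\<integral>\<^sup>+\<tau>. (\<integral>\<^sup>+\<eta>. ennreal (Hf Cc \<eta>0 T \<tau> \<eta>) \<partial>lborel) \<partial>lborel)"
    by (subst lborel.nn_integral_fst[symmetric]) auto
  also have "\<dots> = (\<integral>\<^sup>+\<tau>. ennreal (2*exp (-1)/Cc) * indicator {1..T} \<tau> \<partial>lborel)" unfolding inner ..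
  also have "\<dots> = ennreal (2*exp (-1)/Cc) * ennreal (T - 1)"
    using T1 by (simp add: nn_integral_cmult_indicator emeasure_lborel_Icc)
  finally show ?thesis .
qed




lemma bdry_eq:
  "bdry_integrand (bq p q) (x, 0, 0) (r, 0, 0) (\<tau>, \<eta>) = complex_of_real (Fd p q x r 0 \<tau> \<eta>)"
proof -
  have e: "complex_of_real \<tau> * (\<i> * complex_of_real (0 - 0) + \<i> * complex_of_real (\<eta> * (0 - 0))
            - complex_of_real (bq p q x + bq p q r - \<eta> * (x + r)))
        = complex_of_real (\<tau>*(\<eta>*(x+r) - bq p q x - bq p q r - 0))"
    by (simp add: algebra_simps)
  show ?thesis unfolding bdry_integrand_def Fd_def
    by (simp only: prod.case e exp_of_real) simp
qed

lemma szego_integrand_eq: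
  "(case v of (\<tau>, \<eta>) \<Rightarrow>
          complex_of_real \<tau> *
          exp (complex_of_real (\<eta> * \<tau>) * (complex_of_real x + cnj (complex_of_real r))
               + \<i> * complex_of_real \<tau> * (\<i> * complex_of_real (bq p q x + h) - cnj (\<i> * complex_of_real (bq p q r + k))))
          / complex_of_real (Nfun (bq p q) \<eta> \<tau>))
   = complex_of_real (Fd p q x r (h+k) (fst v) (snd v))"
proof -
  obtain \<tau> \<eta> where v: "v = (\<tau>, \<eta>)" by (cases v)
  have e: "complex_of_real (\<eta> * \<tau>) * (complex_of_real x + cnj (complex_of_real r))
               + \<i> * complex_of_real \<tau> * (\<i> * complex_of_real (bq p q x + h) - cnj (\<i> * complex_of_real (bq p q r + k)))
     = complex_of_real (\<tau>*(\<eta>*(x+r) - bq p q x - bq p q r - (h+k)))"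
    by (simp add: complex_eq_iff algebra_simps)
  show ?thesis unfolding v Fd_def
    by (simp only: prod.case e exp_of_real fst_conv snd_conv) simp
qed

lemma szego_eq:
  "szego c (bq p q) (complex_of_real x, \<i> * complex_of_real (bq p q x + h))
               (complex_of_real r, \<i> * complex_of_real (bq p q r + k))
   = complex_of_real (c * integral\<^sup>L (lborel \<Otimes>\<^sub>M lborel) (\<lambda>v. indicator {v. fst v > 0} v * Fd p q x r (h+k) (fst v) (snd v)))"
proof -
  have "(\<lambda>v. indicator {v. fst v > 0} v *\<^sub>R
          (case v of (\<tau>, \<eta>) \<Rightarrow>
          complex_of_real \<tau> *
          exp (complex_of_real (\<eta> * \<tau>) * (fst (complex_of_real x, \<i> * complex_of_real (bq p q x + h)) + cnj (fst (complex_of_real r, \<i> * complex_of_real (bq p q r + k))))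
               + \<i> * complex_of_real \<tau> * (snd (complex_of_real x, \<i> * complex_of_real (bq p q x + h)) - cnj (snd (complex_of_real r, \<i> * complex_of_real (bq p q r + k)))))
          / complex_of_real (Nfun (bq p q) \<eta> \<tau>)))
      = (\<lambda>v. complex_of_real (indicator {v. fst v > 0} v * Fd p q x r (h+k) (fst v) (snd v)))"
  proof
    fix v :: "real \<times> real"
    show "indicator {v. fst v > 0} v *\<^sub>R
          (case v of (\<tau>, \<eta>) \<Rightarrow>
          complex_of_real \<tau> *
          exp (complex_of_real (\<eta> * \<tau>) * (fst (complex_of_real x, \<i> * complex_of_real (bq p q x + h)) + cnj (fst (complex_of_real r, \<i> * complex_of_real (bq p q r + k))))
               + \<i> * complex_of_real \<tau> * (snd (complex_of_real x, \<i> * complex_of_real (bq p q x + h)) - cnj (snd (complex_of_real r, \<i> * complex_of_real (bq p q r + k)))))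
          / complex_of_real (Nfun (bq p q) \<eta> \<tau>))
      = complex_of_real (indicator {v. fst v > 0} v * Fd p q x r (h+k) (fst v) (snd v))"
      unfolding fst_conv snd_conv szego_integrand_eq by (simp add: scaleR_conv_of_real)
  qed
  hence "szego c (bq p q) (complex_of_real x, \<i> * complex_of_real (bq p q x + h))
               (complex_of_real r, \<i> * complex_of_real (bq p q r + k))
     = complex_of_real c * integral\<^sup>L (lborel \<Otimes>\<^sub>M lborel) (\<lambda>v. complex_of_real (indicator {v. fst v > 0} v * Fd p q x r (h+k) (fst v) (snd v)))"
    unfolding szego_def set_lebesgue_integral_def by (rule arg_cong)
  also have "\<dots> = complex_of_real c * complex_of_real (integral\<^sup>L (lborel \<Otimes>\<^sub>M lborel) (\<lambda>v. indicator {v. fst v > 0} v * Fd p q x r (h+k) (fst v) (snd v)))"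
    by (simp only: integral_complex_of_real)
  finally show ?thesis by simp
qed

lemma ennreal_unbounded:
  fixes X :: ennreal and a :: real
  assumes a: "a > 0" and h: "\<And>T. T \<ge> 1 \<Longrightarrow> ennreal (a * (T - 1)) \<le> X"
  shows "X = \<infinity>"
proof (rule ccontr)
  assume "X \<noteq> \<infinity>"
  hence "X < top" by (simp add: less_top)
  then obtain y where y: "y \<ge> 0" "X = ennreal y" by (auto simp: less_top_ennreal)
  define T where "T = 1 + (y+1)/a"
  have "T \<ge> 1" unfolding T_def using a y by simp
  hence "ennreal (a * (T - 1)) \<le> ennreal y" using h y by simp
  moreover have "a * (T - 1) = y + 1" unfolding T_def using a by simp
  ultimately have "y + 1 \<le> y" using y by (simp add: ennreal_le_iff)
  thus False by simp
qed




theorem theorem2p2: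
  fixes p q c x r :: real
  assumes hp: "p < 0"
    and hc: "c > 0"
    and hxr: "(x = r \<and> \<bar>x\<bar> > sqrt (- p)) \<or> (\<bar>x\<bar> = sqrt (- p) \<and> \<bar>r\<bar> = sqrt (- p))"
  shows "(\<forall>\<tau> \<eta>. \<tau> > 0 \<longrightarrow>
            bdry_integrand (bq p q) (x, 0, 0) (r, 0, 0) (\<tau>, \<eta>) \<in> \<real> \<and>
            Re (bdry_integrand (bq p q) (x, 0, 0) (r, 0, 0) (\<tau>, \<eta>)) \<ge> 0)
       \<and> (\<integral>\<^sup>+ v. indicator {v. fst v > 0} v *
              ennreal (c * Re (bdry_integrand (bq p q) (x, 0, 0) (r, 0, 0) v))
            \<partial>(lborel \<Otimes>\<^sub>M lborel)) = \<infinity>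
       \<and> filterlim
           (\<lambda>(h, k). szego c (bq p q)
               (complex_of_real x, \<i> * complex_of_real (bq p q x + h))
               (complex_of_real r, \<i> * complex_of_real (bq p q r + k)))
           at_infinity
           (filtercomap (\<lambda>(h, k). h + k) (at_right (0::real)))"
proof -
  obtain \<eta>0 where sec: "bq p q r = bq p q x + \<eta>0*(r - x)"
    and g0: "\<forall>l. bq p q l - bq p q x - \<eta>0*(l - x) \<ge> 0"
    using tangent_exists[OF hp hxr] by blast
  obtain Cc where Cc0: "Cc > 0"
    and NU: "\<And>\<tau> \<eta>. 1 \<le> \<tau> \<Longrightarrow> \<bar>\<eta> - \<eta>0\<bar>*\<tau> \<le> 1 \<Longrightarrow> Nfun (bq p q) \<eta> \<tau> \<le> Cc * numf p q x r \<eta> \<tau>"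
    using N_upper[OF sec g0] by blast
  define a where "a = 2*exp (-1)/Cc"
  have a0: "a > 0" unfolding a_def using Cc0 by simp
  have low: "Hf Cc \<eta>0 T (fst v) (snd v) \<le> indicator {v. fst v > 0} v * Fd p q x r \<delta> (fst v) (snd v)"
    if d0: "0 \<le> \<delta>" and T1: "T \<ge> 1" and Td: "T*\<delta> \<le> 1" for \<delta> T v
  proof -
    obtain \<tau> \<eta> where v: "v = (\<tau>, \<eta>)" by (cases v)
    show ?thesis
    proof (cases "1 \<le> \<tau> \<and> \<tau> \<le> T \<and> \<bar>\<eta> - \<eta>0\<bar>*\<tau> \<le> 1")
      case True
      have "\<delta>*\<tau> \<le> \<delta>*T" using True d0 by (intro mult_left_mono) auto
      hence dt: "\<delta>*\<tau> \<le> 1" using Td by (simp add: mult.commute)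
      have "Fd p q x r \<delta> \<tau> \<eta> \<ge> \<tau> * exp (-1) / Cc"
        using Fd_lower[OF Cc0 NU[of \<tau> \<eta>] _ d0 dt] True by auto
      thus ?thesis using True v unfolding Hf_def by simp
    next
      case False
      hence "Hf Cc \<eta>0 T \<tau> \<eta> = 0" unfolding Hf_def by auto
      moreover have "indicator {v. fst v > 0} v * Fd p q x r \<delta> \<tau> \<eta> \<ge> 0"
        using Fd_nonneg[of \<tau> p q x r \<delta> \<eta>] v by (cases "\<tau> > 0") auto
      ultimately show ?thesis using v by simp
    qed
  qed
  have Hint: "(\<integral>\<^sup>+v. ennreal (Hf Cc \<eta>0 T (fst v) (snd v)) \<partial>(lborel \<Otimes>\<^sub>M lborel)) = ennreal (a * (T - 1))"
    if "T \<ge> 1" for T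
    using H_integral[OF Cc0 that, of \<eta>0] that a0 unfolding a_def by (simp add: ennreal_mult[symmetric])
  have P1: "\<forall>\<tau> \<eta>. \<tau> > 0 \<longrightarrow>
            bdry_integrand (bq p q) (x, 0, 0) (r, 0, 0) (\<tau>, \<eta>) \<in> \<real> \<and>
            Re (bdry_integrand (bq p q) (x, 0, 0) (r, 0, 0) (\<tau>, \<eta>)) \<ge> 0"
    unfolding bdry_eq using Fd_nonneg by auto
  have P2: "(\<integral>\<^sup>+ v. indicator {v. fst v > 0} v *
              ennreal (c * Re (bdry_integrand (bq p q) (x, 0, 0) (r, 0, 0) v))
            \<partial>(lborel \<Otimes>\<^sub>M lborel)) = \<infinity>"
  proof (rule ennreal_unbounded[of "c*a"])
    show "c * a > 0" using hc a0 by simp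
    fix T :: real assume T1: "T \<ge> 1"
    have "ennreal (c * a * (T - 1)) = ennreal c * ennreal (a * (T - 1))"
      unfolding mult.assoc by (rule ennreal_mult) (use hc a0 T1 in auto)
    also have "\<dots> = ennreal c * (\<integral>\<^sup>+v. ennreal (Hf Cc \<eta>0 T (fst v) (snd v)) \<partial>(lborel \<Otimes>\<^sub>M lborel))"
      using Hint[OF T1] by simp
    also have "\<dots> = (\<integral>\<^sup>+v. ennreal c * ennreal (Hf Cc \<eta>0 T (fst v) (snd v)) \<partial>(lborel \<Otimes>\<^sub>M lborel))"
      by (rule nn_integral_cmult[symmetric]) measurable
    also have "\<dots> \<le> (\<integral>\<^sup>+ v. indicator {v. fst v > 0} v *
              ennreal (c * Re (bdry_integrand (bq p q) (x, 0, 0) (r, 0, 0) v)) \<partial>(lborel \<Otimes>\<^sub>M lborel))"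
    proof (rule nn_integral_mono)
      fix v :: "real \<times> real"
      obtain \<tau> \<eta> where v: "v = (\<tau>, \<eta>)" by (cases v)
      have L: "Hf Cc \<eta>0 T \<tau> \<eta> \<le> indicator {v. fst v > 0} v * Fd p q x r 0 \<tau> \<eta>"
        using low[of 0 T v] T1 v by simp
      show "ennreal c * ennreal (Hf Cc \<eta>0 T (fst v) (snd v)) \<le> indicator {v. fst v > 0} v *
              ennreal (c * Re (bdry_integrand (bq p q) (x, 0, 0) (r, 0, 0) v))"
      proof (cases "\<tau> > 0")
        case True
        have "ennreal c * ennreal (Hf Cc \<eta>0 T \<tau> \<eta>) = ennreal (c * Hf Cc \<eta>0 T \<tau> \<eta>)"
        proof -
          have "Hf Cc \<eta>0 T \<tau> \<eta> \<ge> 0" unfolding Hf_def using Cc0 by auto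
          thus ?thesis by (intro ennreal_mult[symmetric]) (use hc in auto)
        qed
        also have "\<dots> \<le> ennreal (c * Fd p q x r 0 \<tau> \<eta>)"
          using L True v hc by (intro ennreal_leI mult_left_mono) auto
        finally show ?thesis using True v by (simp add: bdry_eq)
      next
        case False
        hence "Hf Cc \<eta>0 T \<tau> \<eta> = 0" unfolding Hf_def by auto
        thus ?thesis using v by simp
      qed
    qed
    finally show "ennreal (c * a * (T - 1)) \<le> (\<integral>\<^sup>+ v. indicator {v. fst v > 0} v *
              ennreal (c * Re (bdry_integrand (bq p q) (x, 0, 0) (r, 0, 0) v)) \<partial>(lborel \<Otimes>\<^sub>M lborel))" .
  qed
  define I where "I = (\<lambda>\<delta>. integral\<^sup>L (lborel \<Otimes>\<^sub>M lborel) (\<lambda>v. indicator {v. fst v > 0} v * Fd p q x r \<delta> (fst v) (snd v)))"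
  have Ilow: "I \<delta> \<ge> a * (1/\<delta> - 1)" if d: "0 < \<delta>" "\<delta> \<le> 1" for \<delta>
  proof -
    define T where "T = 1/\<delta>"
    have T1: "T \<ge> 1" unfolding T_def using d by simp
    have Td: "T * \<delta> \<le> 1" unfolding T_def using d by simp
    have nn: "AE v in lborel \<Otimes>\<^sub>M lborel. 0 \<le> indicator {v. fst v > 0} v * Fd p q x r \<delta> (fst v) (snd v)"
    proof (rule AE_I2)
      fix v :: "real \<times> real"
      show "0 \<le> indicator {v. fst v > 0} v * Fd p q x r \<delta> (fst v) (snd v)"
        using Fd_nonneg[of "fst v" p q x r \<delta> "snd v"] by (cases "fst v > 0") auto
    qed
    have "ennreal (a * (T - 1)) = (\<integral>\<^sup>+v. ennreal (Hf Cc \<eta>0 T (fst v) (snd v)) \<partial>(lborel \<Otimes>\<^sub>M lborel))"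
      using Hint[OF T1] by simp
    also have "\<dots> \<le> (\<integral>\<^sup>+v. ennreal (indicator {v. fst v > 0} v * Fd p q x r \<delta> (fst v) (snd v)) \<partial>(lborel \<Otimes>\<^sub>M lborel))"
      using low[of \<delta> T] d T1 Td by (intro nn_integral_mono ennreal_leI) auto
    also have "\<dots> = ennreal (I \<delta>)" unfolding I_def
      by (rule nn_integral_eq_integral[OF F_integrable[OF d(1)] nn])
    finally have "ennreal (a * (T - 1)) \<le> ennreal (I \<delta>)" .
    moreover have "I \<delta> \<ge> 0" unfolding I_def using nn by (rule integral_nonneg_AE)
    ultimately show ?thesis unfolding T_def by (simp add: ennreal_le_iff)
  qed
  have P3: "filterlim
           (\<lambda>(h, k). szego c (bq p q)
               (complex_of_real x, \<i> * complex_of_real (bq p q x + h))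
               (complex_of_real r, \<i> * complex_of_real (bq p q r + k)))
           at_infinity
           (filtercomap (\<lambda>(h, k). h + k) (at_right (0::real)))"
  proof (subst filterlim_at_infinity[OF order_refl], intro allI impI)
    fix B :: real assume B: "B > 0"
    define d where "d = min (1/2) (c*a/(2*B))"
    have d0: "d > 0" unfolding d_def using B hc a0 by simp
    have good: "B \<le> c * I \<delta>" if "0 < \<delta>" "\<delta> < d" for \<delta>
    proof -
      have d12: "\<delta> \<le> 1/2" and dB: "\<delta> \<le> c*a/(2*B)" using that unfolding d_def by auto
      have "1/\<delta> - 1 \<ge> 1/(2*\<delta>)" using that d12 by (simp add: field_simps)
      hence "a * (1/\<delta> - 1) \<ge> a * (1/(2*\<delta>))" using a0 by (intro mult_left_mono) auto
      hence I1: "I \<delta> \<ge> a/(2*\<delta>)" using Ilow[of \<delta>] that d12 by simp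
      have "B \<le> c*a/(2*\<delta>)" using dB that B by (simp add: field_simps)
      also have "\<dots> = c * (a/(2*\<delta>))" by simp
      also have "\<dots> \<le> c * I \<delta>" using I1 hc by (intro mult_left_mono) auto
      finally show ?thesis .
    qed
    show "\<forall>\<^sub>F hk in filtercomap (\<lambda>(h, k). h + k) (at_right 0).
            B \<le> norm ((\<lambda>(h, k). szego c (bq p q)
               (complex_of_real x, \<i> * complex_of_real (bq p q x + h))
               (complex_of_real r, \<i> * complex_of_real (bq p q r + k))) hk)"
      unfolding eventually_filtercomap
    proof (intro exI conjI allI impI)
      show "eventually (\<lambda>\<delta>. 0 < \<delta> \<and> \<delta> < d) (at_right (0::real))"
        unfolding eventually_at_right_field using d0 by auto
      fix hk :: "real \<times> real"
      obtain h k where hk: "hk = (h, k)" by (cases hk)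
      assume "0 < (case hk of (h, k) \<Rightarrow> h + k) \<and> (case hk of (h, k) \<Rightarrow> h + k) < d"
      hence hk1: "0 < h + k" "h + k < d" using hk by auto
      have I0: "I (h+k) \<ge> 0" unfolding I_def
      proof (rule integral_nonneg_AE, rule AE_I2)
        fix v :: "real \<times> real"
        show "0 \<le> indicator {v. fst v > 0} v * Fd p q x r (h+k) (fst v) (snd v)"
          using Fd_nonneg[of "fst v" p q x r "h+k" "snd v"] by (cases "fst v > 0") auto
      qed
      show "B \<le> norm ((\<lambda>(h, k). szego c (bq p q)
               (complex_of_real x, \<i> * complex_of_real (bq p q x + h))
               (complex_of_real r, \<i> * complex_of_real (bq p q r + k))) hk)"
        unfolding hk prod.case szego_eq using good[OF hk1] I0 hc unfolding I_def by (simp add: norm_mult abs_of_nonneg)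
    qed
  qed
  show ?thesis using P1 P2 P3 by blast
qed


end
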